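(* For the invertible $N$-component coupled Harry Dym hierarchy (defined in the context), the vector fields $K_i$ and the one-forms $\gamma_i$ are local for all integers $i\ge0$.
   Context: Let $N\ge1$, $\partial=\partial/\partial x$, $\partial^{-1}$ a formal inverse of $\partial$. Let $u_1,\dots,u_N$ be smooth functions of $(x,t)$ (the fields), set $u_0=0$, and let $\varepsilon_0\neq0,\varepsilon_1,\dots,\varepsilon_{N-1}$ be real constants with $\varepsilon_N=0$. Put $J_i=\frac14\varepsilon_i\partial^3+\frac12(u_i\partial+\partial u_i)$, so $J_0=\frac14\varepsilon_0\partial^3$ and $J_N=\frac12(u_N\partial+\partial u_N)=u_N^{1/2}\partial u_N^{1/2}$, both invertible ($J_N^{-1}=u_N^{-1/2}\partial^{-1}u_N^{-1/2}$). Formal adjoint: $\partial^\dagger=-\partial$, multiplication operators self-adjoint, $(AB)^\dagger=B^\dagger A^\dagger$, transpose for matrices. Let $B_0$ be the $N\times N$ matrix with $(B_0)_{ij}=-J_{i+j-1}$ if $i+j-1\le N$ and $0$ otherwise, and $R$ the $N\times N$ matrix with $R_{ij}=\delta_{i,j+1}$ ($1\le j\le N-1$), $R_{iN}=-J_{i-1}J_N^{-1}$; $R$ is invertible, and $B_r:=R^rB_0$ ($r\in\mathbf Z$). One-forms: $\gamma_0=(0,\dots,0,u_N^{-1/2})^T$, $\gamma_{-1}=(-2,0,\dots,0)^T$, $\gamma_s=(R^\dagger)^s\gamma_0$, $\gamma_{-s}=((R^{-1})^\dagger)^{s-1}\gamma_{-1}$ ($s\ge1$). Vector fields (the flows $u_{t_s}=K_s$):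 $K_{-s}:=B_r\gamma_{-r-s}$ ($s\ge1$, any $r>-s$) and $K_s:=B_r\gamma_{-r+s+N}$ ($s\ge0$, any $r\le s+N$), independent of $r$; in particular $K_s=B_N\gamma_s=B_0\gamma_{s+N}$, $K_s=R^sK_0$. A vector field or one-form is local if each component is a function of $u_1,\dots,u_N$ and finitely many of their $x$-derivatives (no $\partial^{-1}$ appears). *)

theory Defs
  imports "HOL-Analysis.Analysis"
begin

text \<open>Fields: u :: nat => real => real, u j the j-th field (as a function of x;
  the time variable plays no role for locality). A jet is the list of all
  x-derivatives of all fields at a point: j k |-> u_j^(k)(x).\<close>

type_synonym jet = "nat \<Rightarrow> nat \<Rightarrow> real"

definition smooth_fun :: "(real \<Rightarrow> real) \<Rightarrow> bool" where
  "smooth_fun f \<longleftrightarrow> (\<forall>k x. (deriv ^^ k) f differentiable (at x))"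

definition jet_of :: "(nat \<Rightarrow> real \<Rightarrow> real) \<Rightarrow> real \<Rightarrow> jet" where
  "jet_of u x = (\<lambda>j k. (deriv ^^ k) (u j) x)"

definition ev :: "(jet \<Rightarrow> real) \<Rightarrow> (nat \<Rightarrow> real \<Rightarrow> real) \<Rightarrow> real \<Rightarrow> real" where
  "ev F u = (\<lambda>x. F (jet_of u x))"

definition is_local :: "nat \<Rightarrow> (jet \<Rightarrow> real) \<Rightarrow> bool" where
  "is_local N F \<longleftrightarrow>
     (\<exists>m. \<forall>a b. (\<forall>j\<in>{1..N}. \<forall>k\<le>m. a j k = b j k) \<longrightarrow> F a = F b)"

text \<open>Admissible field configurations: u_0 = 0, u_1..u_N smooth, u_N > 0
  (so that u_N^(1/2), u_N^(-1/2) make sense).\<close>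
definition admissible :: "nat \<Rightarrow> (nat \<Rightarrow> real \<Rightarrow> real) \<Rightarrow> bool" where
  "admissible N u \<longleftrightarrow> u 0 = (\<lambda>x. 0) \<and> (\<forall>j\<in>{1..N}. smooth_fun (u j)) \<and> (\<forall>x. 0 < u N x)"

definition local_field :: "nat \<Rightarrow> (nat \<Rightarrow> jet \<Rightarrow> real) \<Rightarrow> bool" where
  "local_field N G \<longleftrightarrow>
     (\<forall>i\<in>{1..N}. is_local N (G i) \<and> (\<forall>u. admissible N u \<longrightarrow> smooth_fun (ev (G i) u)))"

definition Jop :: "(nat \<Rightarrow> real) \<Rightarrow> (nat \<Rightarrow> real \<Rightarrow> real) \<Rightarrow> nat \<Rightarrow> (real \<Rightarrow> real) \<Rightarrow> real \<Rightarrow> real" where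
  "Jop eps u i f = (\<lambda>x. eps i / 4 * (deriv ^^ 3) f x
                         + (u i x * deriv f x + deriv (\<lambda>y. u i y * f y) x) / 2)"

text \<open>The one-forms gamma_s (s >= 0): gamma_0 = (0,..,0,u_N^(-1/2)) and
  gamma_(s+1) = R^dagger gamma_s, i.e. (gamma_(s+1))_j = (gamma_s)_(j+1) for j<N and
  J_N (gamma_(s+1))_N = - sum_(i=1..N) J_(i-1) (gamma_s)_i
  (this is how the formal inverse J_N^(-1) in R^dagger is realised).\<close>
definition gamma_chain :: "nat \<Rightarrow> (nat \<Rightarrow> real) \<Rightarrow> (nat \<Rightarrow> nat \<Rightarrow> jet \<Rightarrow> real) \<Rightarrow> bool" where
  "gamma_chain N eps \<Gamma> \<longleftrightarrow>
    (\<forall>u. admissible N u \<longrightarrow>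
      (\<forall>i\<in>{1..N}. ev (\<Gamma> 0 i) u = (\<lambda>x. if i = N then 1 / sqrt (u N x) else 0)) \<and>
      (\<forall>s. (\<forall>j\<in>{1..<N}. ev (\<Gamma> (Suc s) j) u = ev (\<Gamma> s (Suc j)) u) \<and>
           Jop eps u N (ev (\<Gamma> (Suc s) N) u) =
             (\<lambda>x. - (\<Sum>i=1..N. Jop eps u (i - 1) (ev (\<Gamma> s i) u) x))))"

text \<open>The vector fields K_s (s >= 0): K_s = B_0 gamma_(s+N), where
  (B_0 g)_i = - sum_(j=1..N+1-i) J_(i+j-1) g_j; and also K_(s+1) = R K_s, where
  (R K)_i = [i>=2] K_(i-1) - J_(i-1) J_N^(-1) K_N (with some choice of J_N^(-1) K_N).\<close>
definition K_chain :: "nat \<Rightarrow> (nat \<Rightarrow> real) \<Rightarrow> (nat \<Rightarrow> nat \<Rightarrow> jet \<Rightarrow> real)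
                        \<Rightarrow> (nat \<Rightarrow> nat \<Rightarrow> jet \<Rightarrow> real) \<Rightarrow> bool" where
  "K_chain N eps \<Gamma> K \<longleftrightarrow>
    (\<forall>u. admissible N u \<longrightarrow>
      (\<forall>s. \<forall>i\<in>{1..N}. ev (K s i) u =
          (\<lambda>x. - (\<Sum>j=1..N + 1 - i. Jop eps u (i + j - 1) (ev (\<Gamma> (s + N) j) u) x))) \<and>
      (\<forall>s. \<exists>w. smooth_fun w \<and> Jop eps u N w = ev (K s N) u \<and>
          (\<forall>i\<in>{1..N}. ev (K (Suc s) i) u =
             (\<lambda>x. (if 2 \<le> i then ev (K s (i - 1)) u x else 0) - Jop eps u (i - 1) w x))))"

end

theory Submission
  imports Defs
begin

datatype ex = Cst real | V nat nat | P | Add ex ex | Mul ex ex | Sm nat "nat \<Rightarrow> ex"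

primrec evalE :: "nat \<Rightarrow> ex \<Rightarrow> jet \<Rightarrow> real" where
 "evalE N (Cst c) a = c"
|"evalE N (V j k) a = a j k"
|"evalE N P a = 1 / sqrt (a N 0)"
|"evalE N (Add x y) a = evalE N x a + evalE N y a"
|"evalE N (Mul x y) a = evalE N x a * evalE N y a"
|"evalE N (Sm n f) a = (\<Sum>i<n. evalE N (f i) a)"

primrec DE :: "nat \<Rightarrow> ex \<Rightarrow> ex" where
 "DE N (Cst c) = Cst 0"
|"DE N (V j k) = V j (Suc k)"
|"DE N P = Mul (Cst (-1/2)) (Mul (V N 1) (Mul P (Mul P P)))"
|"DE N (Add x y) = Add (DE N x) (DE N y)"
|"DE N (Mul x y) = Add (Mul (DE N x) y) (Mul x (DE N y))"
|"DE N (Sm n f) = Sm n (\<lambda>i. DE N (f i))"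

primrec okE :: "nat \<Rightarrow> ex \<Rightarrow> bool" where
 "okE N (Cst c) = True"
|"okE N (V j k) = (1 \<le> j \<and> j \<le> N)"
|"okE N P = True"
|"okE N (Add x y) = (okE N x \<and> okE N y)"
|"okE N (Mul x y) = (okE N x \<and> okE N y)"
|"okE N (Sm n f) = (\<forall>i<n. okE N (f i))"

primrec ordE :: "ex \<Rightarrow> nat" where
 "ordE (Cst c) = 0"
|"ordE (V j k) = k"
|"ordE P = 0"
|"ordE (Add x y) = max (ordE x) (ordE y)"
|"ordE (Mul x y) = max (ordE x) (ordE y)"
|"ordE (Sm n f) = (\<Sum>i<n. ordE (f i))"

lemma okE_DE: "1 \<le> N \<Longrightarrow> okE N e \<Longrightarrow> okE N (DE N e)"
  by (induct e) auto

lemma local_evalE: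
  assumes N: "1 \<le> N"
  shows "okE N e \<Longrightarrow> (\<forall>j\<in>{1..N}. \<forall>k\<le>ordE e. a j k = b j k) \<Longrightarrow> evalE N e a = evalE N e b"
proof (induct e)
  case (Sm n f)
  have "\<And>i. i < n \<Longrightarrow> evalE N (f i) a = evalE N (f i) b"
  proof -
    fix i assume i: "i < n"
    have le: "ordE (f i) \<le> (\<Sum>i<n. ordE (f i))"
      using i by (intro member_le_sum) auto
    have o: "okE N (f i)" using Sm.prems(1) i by simp
    have "\<forall>j\<in>{1..N}. \<forall>k\<le>ordE (f i). a j k = b j k"
      using Sm.prems(2) le by force
    then show "evalE N (f i) a = evalE N (f i) b"
      by (rule Sm.hyps[OF rangeI o])
  qed
  then show ?case by simp
next
  case (V j k) then show ?case by auto
next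
  case P then show ?case using N by auto
next
  case (Add x y) then show ?case by auto
next
  case (Mul x y) then show ?case by auto
qed simp

lemma is_local_evalE: "1 \<le> N \<Longrightarrow> okE N e \<Longrightarrow> is_local N (evalE N e)"
  unfolding is_local_def using local_evalE by blast

lemma aux_inv: "-(inverse s * (inverse s / 2 * d) * inverse s) = -1/2*(d*(1/s*(1/s*(1/s)))) " for s d :: real
  by (simp only: divide_inverse mult_1_left) (simp only: mult_ac mult_minus_left mult_minus_right)

lemma DERIV_eq: "(f has_real_derivative D) F \<Longrightarrow> D = E \<Longrightarrow> (f has_real_derivative E) F"
  by simp

lemma sem_deriv:
  assumes adm: "admissible N u" and N: "1 \<le> N"
  shows "okE N e \<Longrightarrow> ((\<lambda>x. evalE N e (jet_of u x)) has_real_derivative evalE N (DE N e) (jet_of u x)) (at x)"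
proof (induct e arbitrary: x)
  case (Cst c)
  then show ?case by simp
next
  case (V j k)
  then have "smooth_fun (u j)" using adm unfolding admissible_def by auto
  then have "(deriv ^^ k) (u j) differentiable (at x)" unfolding smooth_fun_def by auto
  then have "((deriv ^^ k) (u j) has_real_derivative deriv ((deriv ^^ k) (u j)) x) (at x)"
    using DERIV_deriv_iff_real_differentiable by blast
  then show ?case by (simp add: jet_of_def)
next
  case P
  have pos: "\<And>x. 0 < u N x" using adm N unfolding admissible_def by auto
  have "smooth_fun (u N)" using adm N unfolding admissible_def by auto
  then have "(deriv ^^ 0) (u N) differentiable (at x)" unfolding smooth_fun_def by blast
  then have d: "(u N has_real_derivative deriv (u N) x) (at x)"
    using DERIV_deriv_iff_real_differentiable by simp
  have d2: "((\<lambda>x. sqrt (u N x)) has_real_derivative (inverse (sqrt (u N x)) / 2 * deriv (u N) x)) (at x)"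
    by (rule DERIV_chain2[OF DERIV_real_sqrt[OF pos] d])
  have sq: "sqrt (u N x) \<noteq> 0" using pos[of x] by simp
  have d3: "((\<lambda>x. inverse (sqrt (u N x))) has_real_derivative
     - (inverse (sqrt (u N x)) * (inverse (sqrt (u N x)) / 2 * deriv (u N) x) * inverse (sqrt (u N x)))) (at x)"
    by (rule DERIV_inverse'[OF d2 sq])
  have e1: "(\<lambda>x. evalE N P (jet_of u x)) = (\<lambda>x. inverse (sqrt (u N x)))"
    by (simp add: jet_of_def fun_eq_iff divide_inverse)
  have j1: "jet_of u x N 1 = deriv (u N) x" and j0: "jet_of u x N 0 = u N x"
    by (simp_all add: jet_of_def)
  have e2: "- (inverse (sqrt (u N x)) * (inverse (sqrt (u N x)) / 2 * deriv (u N) x) * inverse (sqrt (u N x)))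
     = evalE N (DE N P) (jet_of u x)"
    unfolding DE.simps evalE.simps j1 j0 by (rule aux_inv)
  show ?case unfolding e1 by (rule DERIV_eq[OF d3 e2])
next
  case (Add x1 x2)
  have o1: "okE N x1" and o2: "okE N x2" using Add.prems by simp_all
  have d1: "((\<lambda>x. evalE N x1 (jet_of u x)) has_real_derivative evalE N (DE N x1) (jet_of u x)) (at x)"
    by (rule Add.hyps(1)[OF o1])
  have d2: "((\<lambda>x. evalE N x2 (jet_of u x)) has_real_derivative evalE N (DE N x2) (jet_of u x)) (at x)"
    by (rule Add.hyps(2)[OF o2])
  show ?case unfolding evalE.simps DE.simps by (rule DERIV_add[OF d1 d2])
next
  case (Mul x1 x2)
  have o1: "okE N x1" and o2: "okE N x2" using Mul.prems by simp_all
  have d1: "((\<lambda>x. evalE N x1 (jet_of u x)) has_real_derivative evalE N (DE N x1) (jet_of u x)) (at x)"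
    by (rule Mul.hyps(1)[OF o1])
  have d2: "((\<lambda>x. evalE N x2 (jet_of u x)) has_real_derivative evalE N (DE N x2) (jet_of u x)) (at x)"
    by (rule Mul.hyps(2)[OF o2])
  show ?case unfolding evalE.simps DE.simps
    by (rule DERIV_eq[OF DERIV_mult[OF d1 d2]]) (simp only: mult.commute add.commute)
next
  case (Sm n f)
  have "\<And>i. i \<in> {..<n} \<Longrightarrow> ((\<lambda>x. evalE N (f i) (jet_of u x)) has_real_derivative evalE N (DE N (f i)) (jet_of u x)) (at x)"
  proof -
    fix i assume "i \<in> {..<n}"
    then have o: "okE N (f i)" using Sm.prems by simp
    show "((\<lambda>x. evalE N (f i) (jet_of u x)) has_real_derivative evalE N (DE N (f i)) (jet_of u x)) (at x)"
      by (rule Sm.hyps[OF rangeI o])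
  qed
  from DERIV_sum[OF this] show ?case unfolding evalE.simps DE.simps .
qed

definition sv :: "nat \<Rightarrow> (nat \<Rightarrow> real \<Rightarrow> real) \<Rightarrow> ex \<Rightarrow> real \<Rightarrow> real" where
  "sv N u e = ev (evalE N e) u"

lemma sv_deriv:
  assumes "admissible N u" "1 \<le> N" "okE N e"
  shows "deriv (sv N u e) = sv N u (DE N e)"
  using sem_deriv[OF assms(1,2) assms(3)] unfolding sv_def ev_def
  by (intro ext DERIV_imp_deriv) auto

lemma sv_has_deriv:
  assumes "admissible N u" "1 \<le> N" "okE N e"
  shows "(sv N u e has_real_derivative sv N u (DE N e) x) (at x)"
  using sem_deriv[OF assms(1,2) assms(3)] unfolding sv_def ev_def by auto

lemma sv_smooth:
  assumes "admissible N u" "1 \<le> N" "okE N e"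
  shows "smooth_fun (sv N u e)"
proof -
  have "\<And>e. okE N e \<Longrightarrow> (deriv ^^ k) (sv N u e) = sv N u ((DE N ^^ k) e)
     \<and> okE N ((DE N ^^ k) e)" for k
  proof (induct k)
    case (Suc k)
    then show ?case using sv_deriv[OF assms(1,2)] okE_DE[OF assms(2)] by simp
  qed simp
  then show ?thesis unfolding smooth_fun_def
    using sv_has_deriv[OF assms(1,2)] real_differentiable_def assms(3) by metis
qed

definition ee :: "nat \<Rightarrow> (nat \<Rightarrow> real) \<Rightarrow> nat \<Rightarrow> real" where
  "ee N eps a = (if a \<le> N then eps (N - a) else 0)"

definition UE :: "nat \<Rightarrow> nat \<Rightarrow> ex" where
  "UE N a = (if a < N then V (N - a) 0 else Cst 0)"

definition UV :: "nat \<Rightarrow> nat \<Rightarrow> ex" where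
  "UV N i = (if 1 \<le> i \<and> i \<le> N then V i 0 else Cst 0)"

definition Texpr :: "nat \<Rightarrow> (nat \<Rightarrow> real) \<Rightarrow> nat \<Rightarrow> ex \<Rightarrow> ex \<Rightarrow> ex" where
  "Texpr N eps a x y = Add (Mul (Cst (ee N eps a / 4)) (Add (Mul x (DE N (DE N y))) (Mul (Cst (-1/2)) (Mul (DE N x) (DE N y)))))
      (Mul (Cst (1/2)) (Mul (UE N a) (Mul x y)))"

definition Wexpr :: "nat \<Rightarrow> (nat \<Rightarrow> real) \<Rightarrow> nat \<Rightarrow> (nat \<Rightarrow> ex) \<Rightarrow> ex" where
  "Wexpr N eps n f = Sm (Suc n) (\<lambda>a. Sm (Suc (n - a)) (\<lambda>b. Texpr N eps a (f b) (f (n - a - b))))"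

definition nextK :: "nat \<Rightarrow> (nat \<Rightarrow> real) \<Rightarrow> nat \<Rightarrow> ex list \<Rightarrow> ex" where
  "nextK N eps n L = (if n = 0 then P else
     Mul (Cst (-1)) (Mul P (Wexpr N eps n (\<lambda>j. if j < length L then L ! j else Cst 0))))"

primrec KL :: "nat \<Rightarrow> (nat \<Rightarrow> real) \<Rightarrow> nat \<Rightarrow> ex list" where
  "KL N eps 0 = []"
| "KL N eps (Suc n) = KL N eps n @ [nextK N eps n (KL N eps n)]"

definition KE :: "nat \<Rightarrow> (nat \<Rightarrow> real) \<Rightarrow> nat \<Rightarrow> ex" where
  "KE N eps n = KL N eps (Suc n) ! n"

lemma length_KL: "length (KL N eps n) = n"
  by (induct n) auto

lemma KL_nth: "j < n \<Longrightarrow> KL N eps n ! j = KE N eps j"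
proof (induct n)
  case (Suc n)
  show ?case
  proof (cases "j < n")
    case True
    then show ?thesis using Suc by (simp add: nth_append length_KL)
  next
    case False
    then have "j = n" using Suc by simp
    then show ?thesis by (simp add: KE_def)
  qed
qed simp

lemma KE_eq: "KE N eps n = nextK N eps n (KL N eps n)"
  by (simp add: KE_def nth_append length_KL)

lemma KE_0: "KE N eps 0 = P"
  by (simp add: KE_eq nextK_def)

definition trunc :: "nat \<Rightarrow> (nat \<Rightarrow> ex) \<Rightarrow> nat \<Rightarrow> ex" where
  "trunc n f j = (if j < n then f j else Cst 0)"

lemma KE_Suc: "n \<ge> 1 \<Longrightarrow> KE N eps n = Mul (Cst (-1)) (Mul P (Wexpr N eps n (trunc n (KE N eps))))"
proof -
  assume "n \<ge> 1"
  have "(\<lambda>j. if j < length (KL N eps n) then KL N eps n ! j else Cst 0) = trunc n (KE N eps)"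
    by (auto simp: trunc_def length_KL KL_nth fun_eq_iff)
  then show ?thesis using \<open>n \<ge> 1\<close> by (simp add: KE_eq nextK_def)
qed

lemma ok_UE: "okE N (UE N a)" by (auto simp: UE_def)
lemma ok_UV: "okE N (UV N a)" by (simp add: UV_def)

lemma ok_Texpr: "1 \<le> N \<Longrightarrow> okE N x \<Longrightarrow> okE N y \<Longrightarrow> okE N (Texpr N eps a x y)"
  by (simp add: Texpr_def okE_DE ok_UE)

lemma ok_Wexpr: "1 \<le> N \<Longrightarrow> (\<And>j. okE N (f j)) \<Longrightarrow> okE N (Wexpr N eps n f)"
  by (simp add: Wexpr_def ok_Texpr)

lemma ok_nextK: "1 \<le> N \<Longrightarrow> list_all (okE N) L \<Longrightarrow> okE N (nextK N eps n L)"
  unfolding nextK_def by (auto intro!: ok_Wexpr simp: list_all_length)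

lemma ok_KL: "1 \<le> N \<Longrightarrow> list_all (okE N) (KL N eps n)"
  by (induct n) (auto intro!: ok_nextK)

lemma ok_KE: "1 \<le> N \<Longrightarrow> okE N (KE N eps n)"
  unfolding KE_eq by (intro ok_nextK ok_KL)

lemma refl_sum: "(\<Sum>b\<le>m. g b (m - b)) = (\<Sum>b\<le>m. g (m - b) (b::nat)) " for g :: "nat \<Rightarrow> nat \<Rightarrow> real"
  by (rule sum.reindex_bij_witness[where i="\<lambda>b. m - b" and j="\<lambda>b. m - b"]) auto

lemma tri_swap: "(\<Sum>a\<le>n. \<Sum>b\<le>n - a. f a b) = (\<Sum>b\<le>n. \<Sum>a\<le>n - b. f a b)" for f :: "nat \<Rightarrow> nat \<Rightarrow> real"
proof -
  have "(\<Sum>a\<le>n. \<Sum>b\<le>n - a. f a b) = (\<Sum>a\<le>n. \<Sum>b\<le>n. if a + b \<le> n then f a b else 0)"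
  proof (rule sum.cong[OF refl])
    fix a assume "a \<in> {..n}"
    then show "(\<Sum>b\<le>n - a. f a b) = (\<Sum>b\<le>n. if a + b \<le> n then f a b else 0)"
      by (intro sum.mono_neutral_cong_left) auto
  qed
  also have "\<dots> = (\<Sum>b\<le>n. \<Sum>a\<le>n. if a + b \<le> n then f a b else 0)"
    by (rule sum.swap)
  also have "\<dots> = (\<Sum>b\<le>n. \<Sum>a\<le>n - b. f a b)"
  proof (rule sum.cong[OF refl])
    fix b assume "b \<in> {..n}"
    then show "(\<Sum>a\<le>n. if a + b \<le> n then f a b else 0) = (\<Sum>a\<le>n - b. f a b)"
      by (intro sum.mono_neutral_cong_right) auto
  qed
  finally show ?thesis .
qed

lemma claim2_real:
  fixes v v1 v2 v3 e U U1 :: "nat \<Rightarrow> real"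
  shows "(\<Sum>a\<le>n. \<Sum>b\<le>n-a. e a/4 * (v1 b * v2 (n-a-b) + v b * v3 (n-a-b) - 1/2 * (v2 b * v1 (n-a-b) + v1 b * v2 (n-a-b)))
           + 1/2 * (U1 a * (v b * v (n-a-b)) + U a * (v1 b * v (n-a-b) + v b * v1 (n-a-b))))
       = (\<Sum>b\<le>n. v b * (\<Sum>a\<le>n-b. e a/4 * v3 (n-b-a) + 1/2 * (U1 a * v (n-b-a)) + U a * v1 (n-b-a)))"
proof -
  define ph where "ph a c = e a/4 * v3 c + 1/2 * (U1 a * v c) + U a * v1 c" for a c
  have inner: "(\<Sum>b\<le>n-a. e a/4 * (v1 b * v2 (n-a-b) + v b * v3 (n-a-b) - 1/2 * (v2 b * v1 (n-a-b) + v1 b * v2 (n-a-b)))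
           + 1/2 * (U1 a * (v b * v (n-a-b)) + U a * (v1 b * v (n-a-b) + v b * v1 (n-a-b))))
       = (\<Sum>b\<le>n-a. v b * ph a (n-a-b))" for a
  proof -
    let ?m = "n - a"
    have pt: "e a/4 * (v1 b * v2 (?m-b) + v b * v3 (?m-b) - 1/2 * (v2 b * v1 (?m-b) + v1 b * v2 (?m-b)))
           + 1/2 * (U1 a * (v b * v (?m-b)) + U a * (v1 b * v (?m-b) + v b * v1 (?m-b)))
       = v b * ph a (?m-b) + e a/8 * (v1 b * v2 (?m-b) - v2 b * v1 (?m-b))
         + U a/2 * (v1 b * v (?m-b) - v b * v1 (?m-b))" for b
      unfolding ph_def by (simp add: algebra_simps)
    have z1: "(\<Sum>b\<le>?m. v1 b * v2 (?m-b) - v2 b * v1 (?m-b)) = 0"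
      using refl_sum[of "\<lambda>b c. v1 b * v2 c" ?m] by (simp add: sum_subtractf mult.commute)
    have z2: "(\<Sum>b\<le>?m. v1 b * v (?m-b) - v b * v1 (?m-b)) = 0"
      using refl_sum[of "\<lambda>b c. v1 b * v c" ?m] by (simp add: sum_subtractf mult.commute)
    have "(\<Sum>b\<le>?m. e a/4 * (v1 b * v2 (?m-b) + v b * v3 (?m-b) - 1/2 * (v2 b * v1 (?m-b) + v1 b * v2 (?m-b)))
           + 1/2 * (U1 a * (v b * v (?m-b)) + U a * (v1 b * v (?m-b) + v b * v1 (?m-b))))
       = (\<Sum>b\<le>?m. v b * ph a (?m-b)) + e a/8 * (\<Sum>b\<le>?m. v1 b * v2 (?m-b) - v2 b * v1 (?m-b))
         + U a/2 * (\<Sum>b\<le>?m. v1 b * v (?m-b) - v b * v1 (?m-b))"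
      unfolding pt by (simp add: sum.distrib sum_distrib_left)
    then show ?thesis using z1 z2 by (simp add: diff_diff_add)
  qed
  have "(\<Sum>a\<le>n. \<Sum>b\<le>n-a. e a/4 * (v1 b * v2 (n-a-b) + v b * v3 (n-a-b) - 1/2 * (v2 b * v1 (n-a-b) + v1 b * v2 (n-a-b)))
           + 1/2 * (U1 a * (v b * v (n-a-b)) + U a * (v1 b * v (n-a-b) + v b * v1 (n-a-b))))
       = (\<Sum>a\<le>n. \<Sum>b\<le>n-a. v b * ph a (n-a-b))"
    using inner by simp
  also have "\<dots> = (\<Sum>b\<le>n. \<Sum>a\<le>n-b. v b * ph a (n-a-b))"
    by (rule tri_swap)
  also have "\<dots> = (\<Sum>b\<le>n. v b * (\<Sum>a\<le>n-b. ph a (n-b-a)))"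
    by (simp add: sum_distrib_left add.commute)
  finally show ?thesis unfolding ph_def .
qed

definition Fexpr :: "nat \<Rightarrow> (nat \<Rightarrow> real) \<Rightarrow> (nat \<Rightarrow> ex) \<Rightarrow> nat \<Rightarrow> ex" where
  "Fexpr N eps f j = Sm (Suc j) (\<lambda>a. Add (Mul (Cst (ee N eps a / 4)) (DE N (DE N (DE N (f (j - a))))))
      (Add (Mul (Cst (1/2)) (Mul (DE N (UE N a)) (f (j - a)))) (Mul (UE N a) (DE N (f (j - a))))))"

lemma eval_T: "evalE N (Texpr N eps a x y) J =
   ee N eps a / 4 * (evalE N x J * evalE N (DE N (DE N y)) J - 1/2 * (evalE N (DE N x) J * evalE N (DE N y) J))
   + 1/2 * (evalE N (UE N a) J * (evalE N x J * evalE N y J))"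
  by (simp add: Texpr_def)

lemma eval_DT: "evalE N (DE N (Texpr N eps a x y)) J =
   ee N eps a / 4 * (evalE N (DE N x) J * evalE N (DE N (DE N y)) J + evalE N x J * evalE N (DE N (DE N (DE N y))) J
      - 1/2 * (evalE N (DE N (DE N x)) J * evalE N (DE N y) J + evalE N (DE N x) J * evalE N (DE N (DE N y)) J))
   + 1/2 * (evalE N (DE N (UE N a)) J * (evalE N x J * evalE N y J)
      + evalE N (UE N a) J * (evalE N (DE N x) J * evalE N y J + evalE N x J * evalE N (DE N y) J))"
  by (simp add: Texpr_def algebra_simps)

lemma claim2_eval:
  "evalE N (DE N (Wexpr N eps n f)) J = (\<Sum>b\<le>n. evalE N (f b) J * evalE N (Fexpr N eps f (n - b)) J)"
proof -
  define v where "v b = evalE N (f b) J" for b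
  define v1 where "v1 b = evalE N (DE N (f b)) J" for b
  define v2 where "v2 b = evalE N (DE N (DE N (f b))) J" for b
  define v3 where "v3 b = evalE N (DE N (DE N (DE N (f b)))) J" for b
  define e where "e a = ee N eps a" for a
  define U where "U a = evalE N (UE N a) J" for a
  define U1 where "U1 a = evalE N (DE N (UE N a)) J" for a
  have "evalE N (DE N (Wexpr N eps n f)) J =
     (\<Sum>a\<le>n. \<Sum>b\<le>n-a. e a / 4 * (v1 b * v2 (n-a-b) + v b * v3 (n-a-b) - 1/2 * (v2 b * v1 (n-a-b) + v1 b * v2 (n-a-b)))
           + 1/2 * (U1 a * (v b * v (n-a-b)) + U a * (v1 b * v (n-a-b) + v b * v1 (n-a-b))))"
    unfolding Wexpr_def DE.simps evalE.simps lessThan_Suc_atMost eval_DT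
      v_def v1_def v2_def v3_def e_def U_def U1_def ..
  also have "\<dots> = (\<Sum>b\<le>n. v b * (\<Sum>a\<le>n-b. e a / 4 * v3 (n-b-a) + 1/2 * (U1 a * v (n-b-a)) + U a * v1 (n-b-a)))"
    by (rule claim2_real)
  also have "\<dots> = (\<Sum>b\<le>n. evalE N (f b) J * evalE N (Fexpr N eps f (n - b)) J)"
    unfolding Fexpr_def evalE.simps lessThan_Suc_atMost
      v_def v1_def v2_def v3_def e_def U_def U1_def by (simp add: add.assoc)
  finally show ?thesis .
qed

lemma W_split:
  assumes n: "n \<ge> 1" and e0: "ee N eps 0 = 0"
  shows "evalE N (Wexpr N eps n f) J = evalE N (Wexpr N eps n (trunc n f)) J
     + evalE N (UE N 0) J * evalE N (f 0) J * evalE N (f n) J"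
proof -
  define X where "X = 1/2 * evalE N (UE N 0) J * evalE N (f 0) J * evalE N (f n) J"
  have tm: "evalE N (Texpr N eps a (f b) (f (n - a - b))) J =
      evalE N (Texpr N eps a (trunc n f b) (trunc n f (n - a - b))) J
      + (if b = 0 then (if a = 0 then X else 0) else 0) + (if b = n - a then (if a = 0 then X else 0) else 0)"
    if ab: "a \<le> n" "b \<le> n - a" for a b
  proof (cases "a = 0")
    case True
    show ?thesis
    proof (cases "b = 0")
      case True
      then show ?thesis using \<open>a = 0\<close> n e0 by (simp add: eval_T trunc_def X_def)
    next
      case False
      show ?thesis
      proof (cases "b = n")
        case True
        then show ?thesis using \<open>a = 0\<close> n e0 False by (simp add: eval_T trunc_def X_def)
      next
        case False
        then show ?thesis using \<open>a = 0\<close> \<open>b \<noteq> 0\<close> ab by (simp add: trunc_def)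
      qed
    qed
  next
    case False
    then have "b < n" "n - a - b < n" using ab n by auto
    then show ?thesis using False by (simp add: trunc_def)
  qed
  have "evalE N (Wexpr N eps n f) J = (\<Sum>a\<le>n. \<Sum>b\<le>n-a. evalE N (Texpr N eps a (f b) (f (n - a - b))) J)"
    unfolding Wexpr_def evalE.simps lessThan_Suc_atMost ..
  also have "\<dots> = (\<Sum>a\<le>n. \<Sum>b\<le>n-a. evalE N (Texpr N eps a (trunc n f b) (trunc n f (n - a - b))) J
      + (if b = 0 then (if a = 0 then X else 0) else 0) + (if b = n - a then (if a = 0 then X else 0) else 0))"
    by (intro sum.cong refl tm) auto
  also have "\<dots> = evalE N (Wexpr N eps n (trunc n f)) J + 2 * X"
    unfolding Wexpr_def evalE.simps lessThan_Suc_atMost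
    by (simp add: sum.distrib sum_distrib_left[symmetric])
  finally show ?thesis unfolding X_def by simp
qed

lemma pp_aux: "0 < c \<Longrightarrow> c * (1 / sqrt c * (1 / sqrt c)) = (1::real)"
proof -
  assume c: "0 < c"
  have s: "sqrt c * sqrt c = c" using c by simp
  have "1 / sqrt c * (1 / sqrt c) = 1 / (sqrt c * sqrt c)" by (simp only: divide_inverse mult_1_left inverse_mult_distrib)
  also have "\<dots> = 1 / c" using s by simp
  finally show ?thesis using c by simp
qed

lemma eval_UE0: "1 \<le> N \<Longrightarrow> evalE N (UE N 0) J = J N 0"
  by (simp add: UE_def)

lemma W_val:
  assumes N: "1 \<le> N" and e0: "eps N = 0" and pos: "0 < J N 0"
  shows "evalE N (Wexpr N eps n (KE N eps)) J = (if n = 0 then 1/2 else 0)"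
proof (cases "n = 0")
  case True
  have "evalE N (Wexpr N eps 0 (KE N eps)) J = 1/2 * (J N 0 * (1 / sqrt (J N 0) * (1 / sqrt (J N 0))))"
    using N e0 by (simp add: Wexpr_def eval_T KE_0 eval_UE0 ee_def)
  then show ?thesis using True pp_aux[OF pos] by simp
next
  case False
  then have n: "n \<ge> 1" by simp
  have ee0: "ee N eps 0 = 0" using e0 by (simp add: ee_def)
  define w where "w = evalE N (Wexpr N eps n (trunc n (KE N eps))) J"
  have kn: "evalE N (KE N eps n) J = - (1 / sqrt (J N 0) * w)"
    using n by (simp add: KE_Suc w_def)
  have "evalE N (Wexpr N eps n (KE N eps)) J = w + J N 0 * (1 / sqrt (J N 0)) * (- (1 / sqrt (J N 0) * w))"
    using W_split[OF n ee0, of "KE N eps" J] N kn by (simp add: KE_0 eval_UE0 w_def)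
  also have "\<dots> = w * (1 - J N 0 * (1 / sqrt (J N 0) * (1 / sqrt (J N 0))))"
    by (simp add: algebra_simps)
  also have "\<dots> = 0" using pp_aux[OF pos] by simp
  finally show ?thesis using False by simp
qed

lemma adm_pos: "admissible N u \<Longrightarrow> 0 < jet_of u x N 0"
  by (simp add: admissible_def jet_of_def)

lemma F_zero:
  assumes N: "1 \<le> N" and e0: "eps N = 0" and adm: "admissible N u"
  shows "evalE N (Fexpr N eps (KE N eps) j) (jet_of u x) = 0"
proof -
  define Fv where "Fv j = evalE N (Fexpr N eps (KE N eps) j) (jet_of u x)" for j
  define k where "k b = evalE N (KE N eps b) (jet_of u x)" for b
  have sumz: "(\<Sum>b\<le>n. k b * Fv (n - b)) = 0" for n
  proof -
    have const: "sv N u (Wexpr N eps n (KE N eps)) = (\<lambda>x. if n = 0 then 1/2 else 0)"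
    proof
      fix y show "sv N u (Wexpr N eps n (KE N eps)) y = (if n = 0 then 1/2 else 0)"
        using W_val[of N eps "jet_of u y" n, OF N e0 adm_pos[OF adm]] by (simp add: sv_def ev_def)
    qed
    have ok: "okE N (Wexpr N eps n (KE N eps))" using N by (simp add: ok_Wexpr ok_KE)
    have "sv N u (DE N (Wexpr N eps n (KE N eps))) x = deriv (sv N u (Wexpr N eps n (KE N eps))) x"
      using sv_deriv[OF adm N ok] by simp
    also have "\<dots> = 0" unfolding const by simp
    finally have "evalE N (DE N (Wexpr N eps n (KE N eps))) (jet_of u x) = 0"
      by (simp add: sv_def ev_def)
    then show ?thesis unfolding claim2_eval k_def Fv_def .
  qed
  have k0: "k 0 \<noteq> 0"
    using adm_pos[OF adm, of x] by (simp add: k_def KE_0)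
  have "Fv j = 0"
  proof (induct j rule: less_induct)
    case (less j)
    have "(\<Sum>b\<le>j. k b * Fv (j - b)) = k 0 * Fv j + (\<Sum>b\<in>{1..j}. k b * Fv (j - b))"
      by (simp add: atMost_atLeast0 sum.atLeast_Suc_atMost)
    also have "(\<Sum>b\<in>{1..j}. k b * Fv (j - b)) = 0"
      using less by (intro sum.neutral) auto
    finally show ?case using sumz[of j] k0 by simp
  qed
  then show ?thesis unfolding Fv_def .
qed

definition JE :: "nat \<Rightarrow> (nat \<Rightarrow> real) \<Rightarrow> nat \<Rightarrow> ex \<Rightarrow> ex" where
  "JE N eps i e = Add (Mul (Cst (eps i / 4)) (DE N (DE N (DE N e))))
      (Mul (Cst (1/2)) (Add (Mul (UV N i) (DE N e)) (DE N (Mul (UV N i) e))))"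

definition GE :: "nat \<Rightarrow> (nat \<Rightarrow> real) \<Rightarrow> nat \<Rightarrow> ex" where
  "GE N eps n = (if n < N - 1 then Cst 0 else KE N eps (n - (N - 1)))"

lemma ok_JE: "1 \<le> N \<Longrightarrow> okE N e \<Longrightarrow> okE N (JE N eps i e)"
  by (simp add: JE_def okE_DE ok_UV)

lemma ok_GE: "1 \<le> N \<Longrightarrow> okE N (GE N eps n)"
  by (simp add: GE_def ok_KE)

lemma sum_rev_atMost: "(\<Sum>i\<le>N. g i) = (\<Sum>a\<le>N. g (N - a))" for g :: "nat \<Rightarrow> real"
  by (rule sum.reindex_bij_witness[where i="\<lambda>b. N - b" and j="\<lambda>b. N - b"]) auto

lemma sum_cut: "(\<Sum>a\<le>m. if a \<le> k then f a else 0) = (\<Sum>a\<le>min m k. f a)" for f :: "nat \<Rightarrow> real"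
proof (induct m)
  case (Suc m)
  show ?case
  proof (cases "Suc m \<le> k")
    case True
    then show ?thesis using Suc by (simp add: min_def)
  next
    case False
    then have "min (Suc m) k = min m k" by simp
    then show ?thesis using Suc False by simp
  qed
qed simp

lemma UV_UE: "a \<le> N \<Longrightarrow> UV N (N - a) = UE N a"
  by (auto simp: UV_def UE_def)

lemma claim4_eval:
  assumes N: "1 \<le> N"
  shows "(\<Sum>i\<le>N. evalE N (JE N eps i (GE N eps (s + i))) J) = evalE N (Fexpr N eps (KE N eps) (Suc s)) J"
proof -
  define ph where "ph a = evalE N (Add (Mul (Cst (ee N eps a / 4)) (DE N (DE N (DE N (KE N eps (Suc s - a))))))
      (Add (Mul (Cst (1/2)) (Mul (DE N (UE N a)) (KE N eps (Suc s - a)))) (Mul (UE N a) (DE N (KE N eps (Suc s - a)))))) J" for a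
  have L: "evalE N (JE N eps (N - a) (GE N eps (s + (N - a)))) J = (if a \<le> Suc s then ph a else 0)"
    if a: "a \<le> N" for a
  proof (cases "a \<le> Suc s")
    case True
    have "\<not> s + (N - a) < N - 1" "s + (N - a) - (N - 1) = Suc s - a" using a True N by arith+
    then have g: "GE N eps (s + (N - a)) = KE N eps (Suc s - a)"
      by (simp add: GE_def)
    show ?thesis using True a unfolding g ph_def JE_def UV_UE[OF a]
      by (simp add: ee_def algebra_simps)
  next
    case False
    have "s + (N - a) < N - 1" using a False N by arith
    then have g: "GE N eps (s + (N - a)) = Cst 0"
      by (simp add: GE_def)
    show ?thesis using False unfolding g JE_def by simp
  qed
  have R: "ph a = (if a \<le> N then ph a else 0)" for a
    by (cases "a < N") (auto simp: ph_def ee_def UE_def)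
  have "(\<Sum>i\<le>N. evalE N (JE N eps i (GE N eps (s + i))) J) =
      (\<Sum>a\<le>N. evalE N (JE N eps (N - a) (GE N eps (s + (N - a)))) J)"
    by (rule sum_rev_atMost)
  also have "\<dots> = (\<Sum>a\<le>N. if a \<le> Suc s then ph a else 0)"
    using L by simp
  also have "\<dots> = (\<Sum>a\<le>min N (Suc s). ph a)" by (rule sum_cut)
  also have "\<dots> = (\<Sum>a\<le>Suc s. if a \<le> N then ph a else 0)"
    by (subst sum_cut) (simp add: min.commute)
  also have "\<dots> = (\<Sum>a\<le>Suc s. ph a)" using R by simp
  also have "\<dots> = evalE N (Fexpr N eps (KE N eps) (Suc s)) J"
    unfolding Fexpr_def evalE.simps lessThan_Suc_atMost ph_def ..
  finally show ?thesis .
qed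

lemma funpow3: "(deriv ^^ 3) f = deriv (deriv (deriv f))"
  by (simp add: eval_nat_numeral)

lemma Jop_sv:
  assumes adm: "admissible N u" and N: "1 \<le> N" and i: "i \<le> N" and ok: "okE N e"
  shows "Jop eps u i (sv N u e) = sv N u (JE N eps i e)"
proof -
  have ui: "u i = sv N u (UV N i)"
  proof (cases "i = 0")
    case True
    then show ?thesis using adm by (simp add: admissible_def UV_def sv_def ev_def fun_eq_iff)
  next
    case False
    then show ?thesis using i by (simp add: UV_def sv_def ev_def jet_of_def fun_eq_iff)
  qed
  have prod: "(\<lambda>y. u i y * sv N u e y) = sv N u (Mul (UV N i) e)"
    unfolding ui by (simp add: sv_def ev_def fun_eq_iff)
  have okM: "okE N (Mul (UV N i) e)" using ok by (simp add: ok_UV)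
  have d1: "deriv (sv N u e) = sv N u (DE N e)" by (rule sv_deriv[OF adm N ok])
  have d2: "deriv (sv N u (DE N e)) = sv N u (DE N (DE N e))" by (rule sv_deriv[OF adm N okE_DE[OF N ok]])
  have d3: "deriv (sv N u (DE N (DE N e))) = sv N u (DE N (DE N (DE N e)))"
    by (rule sv_deriv[OF adm N okE_DE[OF N okE_DE[OF N ok]]])
  have dm: "deriv (sv N u (Mul (UV N i) e)) = sv N u (DE N (Mul (UV N i) e))"
    by (rule sv_deriv[OF adm N okM])
  have ux: "evalE N (UV N i) (jet_of u x) = u i x" for x
    using ui by (simp add: sv_def ev_def fun_eq_iff)
  show ?thesis
    unfolding Jop_def funpow3 d1 d2 d3 prod dm
    by (simp add: fun_eq_iff sv_def ev_def JE_def ux)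
qed

definition Gam :: "nat \<Rightarrow> (nat \<Rightarrow> real) \<Rightarrow> nat \<Rightarrow> nat \<Rightarrow> jet \<Rightarrow> real" where
  "Gam N eps s i = evalE N (GE N eps (s + i - 1))"

definition KEx :: "nat \<Rightarrow> (nat \<Rightarrow> real) \<Rightarrow> nat \<Rightarrow> nat \<Rightarrow> ex" where
  "KEx N eps s i = Mul (Cst (-1)) (Sm (N + 1 - i) (\<lambda>j. JE N eps (i + j) (GE N eps (s + N + j))))"

definition Kf :: "nat \<Rightarrow> (nat \<Rightarrow> real) \<Rightarrow> nat \<Rightarrow> nat \<Rightarrow> jet \<Rightarrow> real" where
  "Kf N eps s i = evalE N (KEx N eps s i)"

lemma rec_eval:
  assumes N: "1 \<le> N" and e0: "eps N = 0" and adm: "admissible N u"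
  shows "(\<Sum>i\<le>N. evalE N (JE N eps i (GE N eps (m + i))) (jet_of u x)) = 0"
  using claim4_eval[OF N, of eps m "jet_of u x"] F_zero[where N=N and eps=eps and u=u and j="Suc m" and x=x, OF N e0 adm] by simp

lemma eval_JE_neg: "evalE N (JE N eps i (Mul (Cst c) e)) J = c * evalE N (JE N eps i e) J"
  by (simp add: JE_def algebra_simps)

lemma Jop_sum_eq:
  assumes N: "1 \<le> N" and adm: "admissible N u"
  shows "(\<Sum>i\<le>N. Jop eps u i (sv N u (GE N eps (m + i))) x) = (\<Sum>i\<le>N. evalE N (JE N eps i (GE N eps (m + i))) (jet_of u x))"
proof (intro sum.cong refl)
  fix i assume "i \<in> {..N}"
  then have i: "i \<le> N" by simp
  have h: "Jop eps u i (sv N u (GE N eps (m + i))) x = sv N u (JE N eps i (GE N eps (m + i))) x"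
    using fun_cong[OF Jop_sv[OF adm N i ok_GE[OF N]]] .
  show "Jop eps u i (sv N u (GE N eps (m + i))) x = evalE N (JE N eps i (GE N eps (m + i))) (jet_of u x)"
    unfolding h by (simp add: sv_def ev_def)
qed

lemma gamma_ok:
  assumes N: "1 \<le> N" and e0: "eps N = 0"
  shows "gamma_chain N eps (Gam N eps)"
  unfolding gamma_chain_def
proof (intro allI impI conjI ballI)
  fix u assume adm: "admissible N u"
  fix i assume i: "i \<in> {1..N}"
  show "ev (Gam N eps 0 i) u = (\<lambda>x. if i = N then 1 / sqrt (u N x) else 0)"
  proof (cases "i = N")
    case True
    then have "GE N eps (0 + i - 1) = P" by (simp add: GE_def KE_0)
    then show ?thesis using True by (simp add: Gam_def ev_def jet_of_def fun_eq_iff)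
  next
    case False
    then have "i - 1 < N - 1" using i by auto
    then have "GE N eps (0 + i - 1) = Cst 0" by (simp add: GE_def)
    then show ?thesis using False by (simp add: Gam_def ev_def fun_eq_iff)
  qed
next
  fix u s j assume "admissible N u" "j \<in> {1..<N}"
  then show "ev (Gam N eps (Suc s) j) u = ev (Gam N eps s (Suc j)) u"
    by (simp add: Gam_def)
next
  fix u s assume adm: "admissible N u"
  show "Jop eps u N (ev (Gam N eps (Suc s) N) u) =
       (\<lambda>x. - (\<Sum>i = 1..N. Jop eps u (i - 1) (ev (Gam N eps s i) u) x))"
  proof
    fix x
    define g where "g i = Jop eps u i (sv N u (GE N eps (s + i))) x" for i
    have z: "(\<Sum>i\<le>N. g i) = 0"
      unfolding g_def Jop_sum_eq[OF N adm] by (rule rec_eval[where N=N and eps=eps and u=u, OF N e0 adm])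
    have e1: "ev (Gam N eps (Suc s) N) u = sv N u (GE N eps (s + N))"
      by (simp add: Gam_def sv_def)
    have e2: "(\<Sum>i = 1..N. Jop eps u (i - 1) (ev (Gam N eps s i) u) x) = (\<Sum>i<N. g i)"
      unfolding sum_bounds_lt_plus1[symmetric] by (simp add: g_def Gam_def sv_def)
    have "(\<Sum>i\<le>N. g i) = (\<Sum>i<N. g i) + g N"
      by (simp add: lessThan_Suc_atMost[symmetric])
    then show "Jop eps u N (ev (Gam N eps (Suc s) N) u) x =
       - (\<Sum>i = 1..N. Jop eps u (i - 1) (ev (Gam N eps s i) u) x)"
      using z unfolding e1 e2 by (simp add: g_def)
  qed
qed

lemma ok_KEx: "1 \<le> N \<Longrightarrow> okE N (KEx N eps s i)"
  by (simp add: KEx_def ok_JE ok_GE)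

lemma K_ok:
  assumes N: "1 \<le> N" and e0: "eps N = 0"
  shows "K_chain N eps (Gam N eps) (Kf N eps)"
  unfolding K_chain_def
proof (intro allI impI conjI ballI)
  fix u s i assume adm: "admissible N u" and i: "i \<in> {1..N}"
  show "ev (Kf N eps s i) u =
          (\<lambda>x. - (\<Sum>j=1..N + 1 - i. Jop eps u (i + j - 1) (ev (Gam N eps (s + N) j) u) x))"
  proof
    fix x
    have h: "Jop eps u (i + k) (ev (Gam N eps (s + N) (Suc k)) u) x = evalE N (JE N eps (i + k) (GE N eps (s + N + k))) (jet_of u x)"
      if k: "k < N + 1 - i" for k
    proof -
      have ik: "i + k \<le> N" using k i by auto
      have "ev (Gam N eps (s + N) (Suc k)) u = sv N u (GE N eps (s + N + k))"
        by (simp add: Gam_def sv_def)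
      then show ?thesis
        using fun_cong[OF Jop_sv[where eps=eps, OF adm N ik ok_GE[where eps=eps and n="s + N + k", OF N]], of x]
        by (simp add: sv_def ev_def)
    qed
    have "(\<Sum>j=1..N + 1 - i. Jop eps u (i + j - 1) (ev (Gam N eps (s + N) j) u) x)
        = (\<Sum>k<N + 1 - i. Jop eps u (i + k) (ev (Gam N eps (s + N) (Suc k)) u) x)"
      unfolding sum_bounds_lt_plus1[symmetric] by simp
    also have "\<dots> = (\<Sum>k<N + 1 - i. evalE N (JE N eps (i + k) (GE N eps (s + N + k))) (jet_of u x))"
      using h by (intro sum.cong refl) auto
    finally show "ev (Kf N eps s i) u x =
          - (\<Sum>j=1..N + 1 - i. Jop eps u (i + j - 1) (ev (Gam N eps (s + N) j) u) x)"
      by (simp add: Kf_def KEx_def ev_def)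
  qed
next
  fix u s assume adm: "admissible N u"
  define w where "w = sv N u (Mul (Cst (-1)) (GE N eps (s + N)))"
  have okw: "okE N (Mul (Cst (-1)) (GE N eps (s + N)))" using N by (simp add: ok_GE)
  have jw: "Jop eps u i w x = - evalE N (JE N eps i (GE N eps (s + N))) (jet_of u x)" if "i \<le> N" for i x
    using fun_cong[OF Jop_sv[where eps=eps, OF adm N that okw], of x]
    by (simp add: w_def sv_def ev_def eval_JE_neg)
  have "smooth_fun w \<and> Jop eps u N w = ev (Kf N eps s N) u \<and>
          (\<forall>i\<in>{1..N}. ev (Kf N eps (Suc s) i) u =
             (\<lambda>x. (if 2 \<le> i then ev (Kf N eps s (i - 1)) u x else 0) - Jop eps u (i - 1) w x))"
  proof (intro conjI ballI)
    show "smooth_fun w" unfolding w_def by (rule sv_smooth[OF adm N okw])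
    show "Jop eps u N w = ev (Kf N eps s N) u"
      using jw[of N] by (simp add: fun_eq_iff Kf_def KEx_def ev_def)
  next
    fix i assume i: "i \<in> {1..N}"
    show "ev (Kf N eps (Suc s) i) u =
             (\<lambda>x. (if 2 \<le> i then ev (Kf N eps s (i - 1)) u x else 0) - Jop eps u (i - 1) w x)"
    proof
      fix x
      define q where "q m j = evalE N (JE N eps j (GE N eps m)) (jet_of u x)" for m j
      have lhs: "ev (Kf N eps (Suc s) i) u x = - (\<Sum>j<N + 1 - i. q (Suc s + N + j) (i + j))"
        by (simp add: Kf_def KEx_def ev_def q_def)
      have jw': "Jop eps u (i - 1) w x = - q (s + N) (i - 1)"
      proof -
        have "i - 1 \<le> N" using i by auto
        from jw[OF this, of x] show ?thesis by (simp add: q_def)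
      qed
      show "ev (Kf N eps (Suc s) i) u x =
             (if 2 \<le> i then ev (Kf N eps s (i - 1)) u x else 0) - Jop eps u (i - 1) w x"
      proof (cases "2 \<le> i")
        case True
        have nn: "N + 1 - (i - 1) = Suc (N + 1 - i)" using True i by auto
        have "ev (Kf N eps s (i - 1)) u x = - (\<Sum>j<N + 1 - (i - 1). q (s + N + j) (i - 1 + j))"
          by (simp add: Kf_def KEx_def ev_def q_def)
        also have "\<dots> = - (q (s + N) (i - 1) + (\<Sum>j<N + 1 - i. q (s + N + Suc j) (i - 1 + Suc j)))"
          unfolding nn sum.lessThan_Suc_shift by simp
        also have "(\<Sum>j<N + 1 - i. q (s + N + Suc j) (i - 1 + Suc j)) = (\<Sum>j<N + 1 - i. q (Suc s + N + j) (i + j))"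
          using True by (intro sum.cong refl) (simp add: add.commute add.left_commute)
        finally show ?thesis using True lhs jw' by simp
      next
        case False
        then have i1: "i = 1" using i by auto
        have z: "(\<Sum>j\<le>N. q (s + N + j) j) = 0"
          unfolding q_def by (rule rec_eval[where N=N and eps=eps and u=u, OF N e0 adm])
        have "(\<Sum>j\<le>N. q (s + N + j) j) = q (s + N) 0 + (\<Sum>j<N. q (s + N + Suc j) (Suc j))"
          unfolding lessThan_Suc_atMost[symmetric] sum.lessThan_Suc_shift by simp
        then have "(\<Sum>j<N. q (Suc s + N + j) (1 + j)) = - q (s + N) 0"
          using z by simp
        then show ?thesis using lhs jw' i1 by simp
      qed
    qed
  qed
  then show "\<exists>w. smooth_fun w \<and> Jop eps u N w = ev (Kf N eps s N) u \<and>
          (\<forall>i\<in>{1..N}. ev (Kf N eps (Suc s) i) u =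
             (\<lambda>x. (if 2 \<le> i then ev (Kf N eps s (i - 1)) u x else 0) - Jop eps u (i - 1) w x))"
    by blast
qed

lemma local_ok:
  assumes N: "1 \<le> N" and ok: "\<And>i. okE N (E i)"
  shows "local_field N (\<lambda>i. evalE N (E i))"
  unfolding local_field_def
proof (intro ballI conjI allI impI)
  fix i u assume "admissible N u"
  then show "smooth_fun (ev (evalE N (E i)) u)"
    using sv_smooth[OF _ N ok] by (simp add: sv_def)
next
  fix i show "is_local N (evalE N (E i))" by (rule is_local_evalE[OF N ok])
qed

theorem mainTheorem11:
  fixes N :: nat and eps :: "nat \<Rightarrow> real"
  assumes "N \<ge> 1" and "eps 0 \<noteq> 0" and "eps N = 0"
  shows "\<exists>\<Gamma> K. gamma_chain N eps \<Gamma> \<and> K_chain N eps \<Gamma> K \<and>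
           (\<forall>s. local_field N (\<Gamma> s)) \<and> (\<forall>s. local_field N (K s))"
proof (intro exI conjI allI)
  show "gamma_chain N eps (Gam N eps)" by (rule gamma_ok[where N=N and eps=eps, OF assms(1,3)])
  show "K_chain N eps (Gam N eps) (Kf N eps)" by (rule K_ok[where N=N and eps=eps, OF assms(1,3)])
  fix s
  show "local_field N (Gam N eps s)"
    using local_ok[OF assms(1), of "\<lambda>i. GE N eps (s + i - 1)"] ok_GE[OF assms(1)]
    by (simp add: Gam_def[abs_def])
  show "local_field N (Kf N eps s)"
    using local_ok[OF assms(1), of "\<lambda>i. KEx N eps s i"] ok_KEx[OF assms(1)]
    by (simp add: Kf_def[abs_def])
qed

end
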